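(* Let $X$ be a permutation group on a set $U$ and $Y$ a permutation group on a set $W$, and let $G=X\times Y$ act on $U\times W$ in product action. Let $\Gamma$ be a $G$-arc-transitive digraph with vertex set $U\times W$. Then $\Gamma\cong\Gamma_1\times\Gamma_2$ for some $X$-arc-transitive digraph $\Gamma_1$ and some $Y$-arc-transitive digraph $\Gamma_2$.
   Context: A digraph is a pair $(V,A)$ with $A\subseteq V\times V$. For a group $H$ acting on the vertex set of a digraph $\Delta$ by automorphisms, $\Delta$ is $H$-arc-transitive if $H$ is transitive on the arc set of $\Delta$. Product action: $(x,y)\in X\times Y$ sends $(u,w)$ to $(u^x,w^y)$. The tensor product $\Gamma_1\times\Gamma_2$ of $\Gamma_1=(V_1,A_1)$ and $\Gamma_2=(V_2,A_2)$ has vertex set $V_1\times V_2$, with $(u_1,u_2)$ pointing to $(v_1,v_2)$ iff $(u_1,v_1)\in A_1$ and $(u_2,v_2)\in A_2$. *)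

theory Defs
  imports "HOL-Algebra.Bij"
begin

type_synonym 'a digraph = "'a set \<times> ('a \<times> 'a) set"

definition is_digraph :: "'a digraph \<Rightarrow> bool" where
  "is_digraph D \<longleftrightarrow> snd D \<subseteq> fst D \<times> fst D"

definition perm_group :: "'a set \<Rightarrow> ('a \<Rightarrow> 'a) set \<Rightarrow> bool" where
  "perm_group U X \<longleftrightarrow> subgroup X (BijGroup U)"

definition arc_transitive :: "('a \<Rightarrow> 'a) set \<Rightarrow> 'a digraph \<Rightarrow> bool" where
  "arc_transitive H D \<longleftrightarrow>
     (\<forall>h\<in>H. bij_betw h (fst D) (fst D) \<and>
        (\<forall>u\<in>fst D. \<forall>v\<in>fst D. (u, v) \<in> snd D \<longleftrightarrow> (h u, h v) \<in> snd D)) \<and>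
     (\<forall>a\<in>snd D. \<forall>b\<in>snd D. \<exists>h\<in>H. (h (fst a), h (snd a)) = b)"

definition prod_action :: "('u \<Rightarrow> 'u) set \<Rightarrow> ('w \<Rightarrow> 'w) set \<Rightarrow> ('u \<times> 'w \<Rightarrow> 'u \<times> 'w) set" where
  "prod_action X Y = {(\<lambda>(u, w). (x u, y w)) | x y. x \<in> X \<and> y \<in> Y}"

definition tensor :: "'u digraph \<Rightarrow> 'w digraph \<Rightarrow> ('u \<times> 'w) digraph" where
  "tensor D1 D2 = (fst D1 \<times> fst D2,
     {((u1, u2), (v1, v2)) | u1 u2 v1 v2. (u1, v1) \<in> snd D1 \<and> (u2, v2) \<in> snd D2})"

definition digraph_iso :: "'a digraph \<Rightarrow> 'b digraph \<Rightarrow> bool" where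
  "digraph_iso D1 D2 \<longleftrightarrow> (\<exists>f. bij_betw f (fst D1) (fst D2) \<and>
     (\<forall>u\<in>fst D1. \<forall>v\<in>fst D1. (u, v) \<in> snd D1 \<longleftrightarrow> (f u, f v) \<in> snd D2))"

end

theory Submission
  imports Defs
begin

lemma one_in:
  assumes "perm_group U X" shows "(\<lambda>x\<in>U. x) \<in> X"
proof -
  have "\<one>\<^bsub>BijGroup U\<^esub> \<in> X" using assms unfolding perm_group_def by (rule subgroup.one_closed)
  thus ?thesis by (simp add: BijGroup_def)
qed

lemma bij_in:
  assumes "perm_group U X" "x \<in> X" shows "bij_betw x U U"
proof -
  have "x \<in> carrier (BijGroup U)" using assms unfolding perm_group_def by (meson subgroup.mem_carrier)
  thus ?thesis by (simp add: BijGroup_def Bij_def)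
qed

theorem lemma2p6:
  fixes U :: "'u set" and W :: "'w set"
    and X :: "('u \<Rightarrow> 'u) set" and Y :: "('w \<Rightarrow> 'w) set"
    and A :: "(('u \<times> 'w) \<times> ('u \<times> 'w)) set"
  assumes "perm_group U X" and "perm_group W Y"
    and "is_digraph (U \<times> W, A)"
    and "arc_transitive (prod_action X Y) (U \<times> W, A)"
  shows "\<exists>\<Gamma>1 \<Gamma>2. is_digraph \<Gamma>1 \<and> fst \<Gamma>1 = U \<and> arc_transitive X \<Gamma>1 \<and>
           is_digraph \<Gamma>2 \<and> fst \<Gamma>2 = W \<and> arc_transitive Y \<Gamma>2 \<and>
           digraph_iso (U \<times> W, A) (tensor \<Gamma>1 \<Gamma>2)"
proof -
  define A1 where "A1 = {(u1, v1) | u1 v1 u2 v2. ((u1,u2),(v1,v2)) \<in> A}"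
  define A2 where "A2 = {(u2, v2) | u1 v1 u2 v2. ((u1,u2),(v1,v2)) \<in> A}"
  have dg: "\<And>a b c d. ((a,b),(c,d)) \<in> A \<Longrightarrow> a \<in> U \<and> b \<in> W \<and> c \<in> U \<and> d \<in> W"
    using assms(3) unfolding is_digraph_def by auto
  have pres: "\<And>x y a b c d. x \<in> X \<Longrightarrow> y \<in> Y \<Longrightarrow> a \<in> U \<Longrightarrow> b \<in> W \<Longrightarrow> c \<in> U \<Longrightarrow> d \<in> W \<Longrightarrow>
      ((a,b),(c,d)) \<in> A \<longleftrightarrow> ((x a, y b),(x c, y d)) \<in> A"
  proof -
    fix x y a b c d assume h: "x \<in> X" "y \<in> Y" "a \<in> U" "b \<in> W" "c \<in> U" "d \<in> W"
    have "(\<lambda>(u, w). (x u, y w)) \<in> prod_action X Y" using h unfolding prod_action_def by blast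
    then show "((a,b),(c,d)) \<in> A \<longleftrightarrow> ((x a, y b),(x c, y d)) \<in> A"
      using assms(4) h unfolding arc_transitive_def by fastforce
  qed
  have trans: "\<And>a b c d a' b' c' d'. ((a,b),(c,d)) \<in> A \<Longrightarrow> ((a',b'),(c',d')) \<in> A \<Longrightarrow>
      \<exists>x\<in>X. \<exists>y\<in>Y. x a = a' \<and> y b = b' \<and> x c = c' \<and> y d = d'"
  proof -
    fix a b c d a' b' c' d' assume h: "((a,b),(c,d)) \<in> A" "((a',b'),(c',d')) \<in> A"
    then obtain g where g: "g \<in> prod_action X Y" "(g (a,b), g (c,d)) = ((a',b'),(c',d'))"
      using assms(4) unfolding arc_transitive_def by fastforce
    then obtain x y where "x \<in> X" "y \<in> Y" "g = (\<lambda>(u, w). (x u, y w))" unfolding prod_action_def by blast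
    then show "\<exists>x\<in>X. \<exists>y\<in>Y. x a = a' \<and> y b = b' \<and> x c = c' \<and> y d = d'" using g by auto
  qed
  have id1: "(\<lambda>x\<in>U. x) \<in> X" using one_in assms(1) .
  have id2: "(\<lambda>x\<in>W. x) \<in> Y" using one_in assms(2) .
  have G1: "is_digraph (U, A1) \<and> arc_transitive X (U, A1)"
  proof -
    have "is_digraph (U, A1)" unfolding is_digraph_def A1_def using dg by fastforce
    moreover have "\<forall>x\<in>X. bij_betw x U U \<and> (\<forall>u\<in>U. \<forall>v\<in>U. (u, v) \<in> A1 \<longleftrightarrow> (x u, x v) \<in> A1)"
    proof (intro ballI conjI)
      fix x assume x: "x \<in> X"
      show "bij_betw x U U" using bij_in[OF assms(1) x] .
    next
      fix x u v assume x: "x \<in> X" and uv: "u \<in> U" "v \<in> U"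
      have "bij_betw x U U" using bij_in[OF assms(1) x] .
      then have xu: "x u \<in> U" "x v \<in> U" using uv bij_betw_apply by metis+
      show "(u, v) \<in> A1 \<longleftrightarrow> (x u, x v) \<in> A1"
      proof
        assume "(u, v) \<in> A1"
        then obtain b d where "((u,b),(v,d)) \<in> A" unfolding A1_def by blast
        then have "((x u, (\<lambda>x\<in>W. x) b),(x v, (\<lambda>x\<in>W. x) d)) \<in> A" using pres[OF x id2] dg by blast
        then show "(x u, x v) \<in> A1" unfolding A1_def by blast
      next
        assume "(x u, x v) \<in> A1"
        then obtain b d where bd: "((x u,b),(x v,d)) \<in> A" unfolding A1_def by blast
        then have "b \<in> W" "d \<in> W" using dg by auto
        then have "((x u, (\<lambda>x\<in>W. x) b),(x v, (\<lambda>x\<in>W. x) d)) \<in> A" using bd by simp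
        then have "((u,b),(v,d)) \<in> A" using pres[OF x id2 uv(1) \<open>b\<in>W\<close> uv(2) \<open>d\<in>W\<close>] by blast
        then show "(u, v) \<in> A1" unfolding A1_def by blast
      qed
    qed
    moreover have "\<forall>a\<in>A1. \<forall>b\<in>A1. \<exists>h\<in>X. (h (fst a), h (snd a)) = b"
    proof (intro ballI)
      fix p q assume "p \<in> A1" "q \<in> A1"
      then obtain a b c d a' b' c' d' where "p = (a,c)" "q = (a',c')" "((a,b),(c,d)) \<in> A" "((a',b'),(c',d')) \<in> A"
        unfolding A1_def by blast
      then show "\<exists>h\<in>X. (h (fst p), h (snd p)) = q" using trans by fastforce
    qed
    ultimately show ?thesis unfolding arc_transitive_def by simp
  qed
  have G2: "is_digraph (W, A2) \<and> arc_transitive Y (W, A2)"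
  proof -
    have "is_digraph (W, A2)" unfolding is_digraph_def A2_def using dg by fastforce
    moreover have "\<forall>x\<in>Y. bij_betw x W W \<and> (\<forall>u\<in>W. \<forall>v\<in>W. (u, v) \<in> A2 \<longleftrightarrow> (x u, x v) \<in> A2)"
    proof (intro ballI conjI)
      fix x assume x: "x \<in> Y"
      show "bij_betw x W W" using bij_in[OF assms(2) x] .
    next
      fix x u v assume x: "x \<in> Y" and uv: "u \<in> W" "v \<in> W"
      have "bij_betw x W W" using bij_in[OF assms(2) x] .
      then have xu: "x u \<in> W" "x v \<in> W" using uv bij_betw_apply by metis+
      show "(u, v) \<in> A2 \<longleftrightarrow> (x u, x v) \<in> A2"
      proof
        assume "(u, v) \<in> A2"
        then obtain b d where "((b,u),(d,v)) \<in> A" unfolding A2_def by blast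
        then have "(((\<lambda>x\<in>U. x) b, x u),((\<lambda>x\<in>U. x) d, x v)) \<in> A" using pres[OF id1 x] dg by blast
        then show "(x u, x v) \<in> A2" unfolding A2_def by blast
      next
        assume "(x u, x v) \<in> A2"
        then obtain b d where bd: "((b, x u),(d, x v)) \<in> A" unfolding A2_def by blast
        then have "b \<in> U" "d \<in> U" using dg by auto
        then have "(((\<lambda>x\<in>U. x) b, x u),((\<lambda>x\<in>U. x) d, x v)) \<in> A" using bd by simp
        then have "((b,u),(d,v)) \<in> A" using pres[OF id1 x \<open>b\<in>U\<close> uv(1) \<open>d\<in>U\<close> uv(2)] by blast
        then show "(u, v) \<in> A2" unfolding A2_def by blast
      qed
    qed
    moreover have "\<forall>a\<in>A2. \<forall>b\<in>A2. \<exists>h\<in>Y. (h (fst a), h (snd a)) = b"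
    proof (intro ballI)
      fix p q assume "p \<in> A2" "q \<in> A2"
      then obtain a b c d a' b' c' d' where "p = (b,d)" "q = (b',d')" "((a,b),(c,d)) \<in> A" "((a',b'),(c',d')) \<in> A"
        unfolding A2_def by blast
      then show "\<exists>h\<in>Y. (h (fst p), h (snd p)) = q" using trans by fastforce
    qed
    ultimately show ?thesis unfolding arc_transitive_def by simp
  qed
  have eq: "A = snd (tensor (U, A1) (W, A2))"
  proof
    show "A \<subseteq> snd (tensor (U, A1) (W, A2))"
      unfolding tensor_def A1_def A2_def by fastforce
  next
    show "snd (tensor (U, A1) (W, A2)) \<subseteq> A"
    proof
      fix z assume "z \<in> snd (tensor (U, A1) (W, A2))"
      then obtain u1 u2 v1 v2 where z: "z = ((u1,u2),(v1,v2))" "(u1,v1) \<in> A1" "(u2,v2) \<in> A2"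
        unfolding tensor_def by auto
      then obtain w1 w2 where a1: "((u1,w1),(v1,w2)) \<in> A" unfolding A1_def by blast
      obtain p q where a2: "((p,u2),(q,v2)) \<in> A" using z unfolding A2_def by blast
      obtain x y where xy: "x \<in> X" "y \<in> Y" "y w1 = u2" "y w2 = v2" using trans[OF a1 a2] by blast
      have "(((\<lambda>x\<in>U. x) u1, y w1),((\<lambda>x\<in>U. x) v1, y w2)) \<in> A"
        using pres[OF id1 xy(2)] a1 dg by blast
      then show "z \<in> A" using z xy dg a1 by simp
    qed
  qed
  have "digraph_iso (U \<times> W, A) (tensor (U, A1) (W, A2))"
    unfolding digraph_iso_def
  proof (intro exI[of _ id] conjI)
    show "bij_betw id (fst (U \<times> W, A)) (fst (tensor (U, A1) (W, A2)))"
      by (simp add: tensor_def)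
    show "\<forall>u\<in>fst (U \<times> W, A). \<forall>v\<in>fst (U \<times> W, A). ((u, v) \<in> snd (U \<times> W, A)) = ((id u, id v) \<in> snd (tensor (U, A1) (W, A2)))"
      using eq by simp
  qed
  then show ?thesis using G1 G2 by (intro exI[of _ "(U, A1)"] exI[of _ "(W, A2)"]) simp
qed

end
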